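(* Let $B=(V,E)$ be a simple Bratteli diagram with $V_0=\{v^0\}$ and $V_k=\{v_1^k,\dots,v_{n(k)}^k\}$, and for $k\ge1$ let $h_j^k\ge1$ be the number of finite paths from $v^0$ to $v_j^k$. Then $\mathbb Q(K^0(V,E),[v^0])=\mathbb Z[v^0]$ if and only if $\gcd(h_1^k,\dots,h_{n(k)}^k)=1$ for all $k\ge1$.
   Context: A Bratteli diagram has levels $V_k$ (finite) and edges $E_k$ from $V_{k-1}$ to $V_k$, with incidence matrices $A_k$ ($|V_k|\times|V_{k-1}|$) counting edges; simple means some telescoping has strictly positive incidence matrices. $K^0(V,E)$ is the direct limit of $\mathbb Z^{V_0}\xrightarrow{A_1}\mathbb Z^{V_1}\xrightarrow{A_2}\cdots$ ordered by the images of the positive cones, with order unit $[v^0]$ the class of $1\in\mathbb Z^{V_0}$. $\mathbb Q(G,u)=\{g\in G:pg=mu\text{ for some nonzero }p\in\mathbb Z,\ m\in\mathbb Z\}$. *)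

theory Defs
  imports Main
begin

text \<open>A Bratteli diagram is encoded by the level sizes n k = |V_k| (vertices of level k
are 0..<n k) and the incidence data A k i j = number of edges from vertex j of V_(k-1)
to vertex i of V_k (k >= 1), i.e. A k is the |V_k| x |V_(k-1)| incidence matrix.\<close>

definition bratteli :: "(nat \<Rightarrow> nat) \<Rightarrow> (nat \<Rightarrow> nat \<Rightarrow> nat \<Rightarrow> nat) \<Rightarrow> bool" where
  "bratteli n A \<longleftrightarrow> n 0 = 1 \<and> (\<forall>k. n k \<ge> 1)
     \<and> (\<forall>k\<ge>1. \<forall>i<n k. \<exists>j<n (k - 1). A k i j > 0)
     \<and> (\<forall>k. \<forall>j<n k. \<exists>i<n (Suc k). A (Suc k) i j > 0)"

definition lvl_map :: "(nat \<Rightarrow> nat) \<Rightarrow> (nat \<Rightarrow> nat \<Rightarrow> nat \<Rightarrow> nat) \<Rightarrow> nat \<Rightarrow> (nat \<Rightarrow> int) \<Rightarrow> nat \<Rightarrow> int" where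
  "lvl_map n A k x = (\<lambda>i. if i < n k then (\<Sum>j<n (k - 1). int (A k i j) * x j) else 0)"

fun trans :: "(nat \<Rightarrow> nat) \<Rightarrow> (nat \<Rightarrow> nat \<Rightarrow> nat \<Rightarrow> nat) \<Rightarrow> nat \<Rightarrow> nat \<Rightarrow> (nat \<Rightarrow> int) \<Rightarrow> nat \<Rightarrow> int" where
  "trans n A k 0 x = x"
| "trans n A k (Suc d) x = lvl_map n A (k + Suc d) (trans n A k d x)"

definition unitvec :: "nat \<Rightarrow> nat \<Rightarrow> int" where
  "unitvec j = (\<lambda>i. if i = j then 1 else 0)"

text \<open>Simple: some telescoping 0 = m_0 < m_1 < ... has strictly positive incidence matrices.\<close>
definition simple_bratteli :: "(nat \<Rightarrow> nat) \<Rightarrow> (nat \<Rightarrow> nat \<Rightarrow> nat \<Rightarrow> nat) \<Rightarrow> bool" where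
  "simple_bratteli n A \<longleftrightarrow> bratteli n A \<and>
     (\<exists>m::nat \<Rightarrow> nat. strict_mono m \<and> m 0 = 0 \<and>
        (\<forall>t. \<forall>i<n (m (Suc t)). \<forall>j<n (m t).
             trans n A (m t) (m (Suc t) - m t) (unitvec j) i > 0))"

fun npaths :: "(nat \<Rightarrow> nat) \<Rightarrow> (nat \<Rightarrow> nat \<Rightarrow> nat \<Rightarrow> nat) \<Rightarrow> nat \<Rightarrow> nat \<Rightarrow> nat" where
  "npaths n A 0 j = (if j < n 0 then 1 else 0)"
| "npaths n A (Suc k) i = (if i < n (Suc k) then (\<Sum>j<n k. A (Suc k) i j * npaths n A k j) else 0)"

text \<open>The direct limit K^0(V,E): representatives (k,x) with x in Z^{V_k}, identified
when their images agree at some later level.\<close>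
definition K0_reps :: "(nat \<Rightarrow> nat) \<Rightarrow> (nat \<times> (nat \<Rightarrow> int)) set" where
  "K0_reps n = {(k, x). \<forall>i\<ge>n k. x i = 0}"

definition K0_rel :: "(nat \<Rightarrow> nat) \<Rightarrow> (nat \<Rightarrow> nat \<Rightarrow> nat \<Rightarrow> nat) \<Rightarrow> ((nat \<times> (nat \<Rightarrow> int)) \<times> (nat \<times> (nat \<Rightarrow> int))) set" where
  "K0_rel n A = {((k, x), (l, y)). (k, x) \<in> K0_reps n \<and> (l, y) \<in> K0_reps n \<and>
      (\<exists>m. k \<le> m \<and> l \<le> m \<and> trans n A k (m - k) x = trans n A l (m - l) y)}"

definition K0 :: "(nat \<Rightarrow> nat) \<Rightarrow> (nat \<Rightarrow> nat \<Rightarrow> nat \<Rightarrow> nat) \<Rightarrow> (nat \<times> (nat \<Rightarrow> int)) set set" where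
  "K0 n A = K0_reps n // K0_rel n A"

definition K0_add :: "(nat \<Rightarrow> nat) \<Rightarrow> (nat \<Rightarrow> nat \<Rightarrow> nat \<Rightarrow> nat) \<Rightarrow> (nat \<times> (nat \<Rightarrow> int)) set \<Rightarrow> (nat \<times> (nat \<Rightarrow> int)) set \<Rightarrow> (nat \<times> (nat \<Rightarrow> int)) set" where
  "K0_add n A g h = K0_rel n A `` {(m, \<lambda>i. trans n A k (m - k) x i + trans n A l (m - l) y i) | k x l y m.
       (k, x) \<in> g \<and> (l, y) \<in> h \<and> k \<le> m \<and> l \<le> m}"

definition K0_zmult :: "(nat \<Rightarrow> nat) \<Rightarrow> (nat \<Rightarrow> nat \<Rightarrow> nat \<Rightarrow> nat) \<Rightarrow> int \<Rightarrow> (nat \<times> (nat \<Rightarrow> int)) set \<Rightarrow> (nat \<times> (nat \<Rightarrow> int)) set" where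
  "K0_zmult n A p g = K0_rel n A `` ((\<lambda>(k, x). (k, \<lambda>i. p * x i)) ` g)"

definition K0_unit :: "(nat \<Rightarrow> nat) \<Rightarrow> (nat \<Rightarrow> nat \<Rightarrow> nat \<Rightarrow> nat) \<Rightarrow> (nat \<times> (nat \<Rightarrow> int)) set" where
  "K0_unit n A = K0_rel n A `` {(0, \<lambda>i. if i < n 0 then 1 else 0)}"

definition K0_Q :: "(nat \<Rightarrow> nat) \<Rightarrow> (nat \<Rightarrow> nat \<Rightarrow> nat \<Rightarrow> nat) \<Rightarrow> (nat \<times> (nat \<Rightarrow> int)) set set" where
  "K0_Q n A = {g \<in> K0 n A. \<exists>p m. p \<noteq> 0 \<and> K0_zmult n A p g = K0_zmult n A m (K0_unit n A)}"

definition K0_Zunit :: "(nat \<Rightarrow> nat) \<Rightarrow> (nat \<Rightarrow> nat \<Rightarrow> nat \<Rightarrow> nat) \<Rightarrow> (nat \<times> (nat \<Rightarrow> int)) set set" where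
  "K0_Zunit n A = {K0_zmult n A m (K0_unit n A) | m. True}"

end

theory Submission
  imports Defs
begin

lemma trans_add: "trans n A k (a + b) x = trans n A (k + a) b (trans n A k a x)"
  by (induction b) (auto simp: add.assoc)

lemma trans_step: "k \<le> m \<Longrightarrow> m \<le> M \<Longrightarrow>
   trans n A k (M - k) x = trans n A m (M - m) (trans n A k (m - k) x)"
  using trans_add[of n A k "m - k" "M - m" x] by simp

lemma trans_lift: "k \<le> m \<Longrightarrow> l \<le> m \<Longrightarrow> m \<le> M \<Longrightarrow>
   trans n A k (m - k) x = trans n A l (m - l) y \<Longrightarrow>
   trans n A k (M - k) x = trans n A l (M - l) y"
  using trans_step[of k m M n A x] trans_step[of l m M n A y] by simp

lemma lvl_map_scale: "lvl_map n A k (\<lambda>i. c * x i) = (\<lambda>i. c * lvl_map n A k x i)"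
  by (auto simp: lvl_map_def sum_distrib_left mult.left_commute)

lemma trans_scale: "trans n A k d (\<lambda>i. c * x i) = (\<lambda>i. c * trans n A k d x i)"
  by (induction d) (auto simp: lvl_map_scale)

lemma rel_scale: "((k,x),(l,y)) \<in> K0_rel n A \<Longrightarrow> ((k,\<lambda>i. c * x i),(l,\<lambda>i. c * y i)) \<in> K0_rel n A"
  by (auto simp: K0_rel_def K0_reps_def trans_scale)

lemma rel_trans: "(a,b) \<in> K0_rel n A \<Longrightarrow> (b,c) \<in> K0_rel n A \<Longrightarrow> (a,c) \<in> K0_rel n A"
proof -
  assume 1: "(a,b) \<in> K0_rel n A" and 2: "(b,c) \<in> K0_rel n A"
  obtain k x where a: "a = (k,x)" by (cases a)
  obtain l y where b: "b = (l,y)" by (cases b)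
  obtain j z where c: "c = (j,z)" by (cases c)
  from 1 obtain m1 where m1: "k \<le> m1" "l \<le> m1" "trans n A k (m1 - k) x = trans n A l (m1 - l) y"
    and r1: "(k,x) \<in> K0_reps n" "(l,y) \<in> K0_reps n"
    unfolding a b K0_rel_def by auto
  from 2 obtain m2 where m2: "l \<le> m2" "j \<le> m2" "trans n A l (m2 - l) y = trans n A j (m2 - j) z"
    and r2: "(j,z) \<in> K0_reps n"
    unfolding c b K0_rel_def by auto
  define M where "M = max m1 m2"
  have "trans n A k (M - k) x = trans n A l (M - l) y"
    using trans_lift[OF m1(1,2) _ m1(3)] M_def by simp
  also have "\<dots> = trans n A j (M - j) z"
    using trans_lift[OF m2(1,2) _ m2(3)] M_def by simp
  finally show ?thesis using r1 r2 m1 m2 M_def unfolding a c K0_rel_def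
    by (auto intro!: exI[of _ M])
qed

lemma equiv_rel: "equiv (K0_reps n) (K0_rel n A)"
proof (rule equivI)
  show "K0_rel n A \<subseteq> K0_reps n \<times> K0_reps n" by (auto simp: K0_rel_def)
  show "refl_on (K0_reps n) (K0_rel n A)"
    unfolding refl_on_def K0_rel_def by auto
  show "sym (K0_rel n A)"
    by (rule symI) (auto simp: K0_rel_def)
  show "Relation.trans (K0_rel n A)"
    by (rule transI) (rule rel_trans)
qed

lemma reps_scale: "(k,x) \<in> K0_reps n \<Longrightarrow> (k,\<lambda>i. c * x i) \<in> K0_reps n"
  by (auto simp: K0_reps_def)

lemma zmult_class:
  assumes "(k,x) \<in> K0_reps n"
  shows "K0_zmult n A p (K0_rel n A `` {(k,x)}) = K0_rel n A `` {(k, \<lambda>i. p * x i)}"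
proof
  show "K0_zmult n A p (K0_rel n A `` {(k,x)}) \<subseteq> K0_rel n A `` {(k, \<lambda>i. p * x i)}"
  proof
    fix w assume "w \<in> K0_zmult n A p (K0_rel n A `` {(k,x)})"
    then obtain l y where ly: "((k,x),(l,y)) \<in> K0_rel n A" and wr: "((l, \<lambda>i. p * y i), w) \<in> K0_rel n A"
      unfolding K0_zmult_def by auto
    have "((k, \<lambda>i. p * x i), (l, \<lambda>i. p * y i)) \<in> K0_rel n A" using rel_scale[OF ly] .
    then show "w \<in> K0_rel n A `` {(k, \<lambda>i. p * x i)}" using rel_trans wr by blast
  qed
  show "K0_rel n A `` {(k, \<lambda>i. p * x i)} \<subseteq> K0_zmult n A p (K0_rel n A `` {(k,x)})"
  proof -
    have "((k,x),(k,x)) \<in> K0_rel n A" using assms by (auto simp: K0_rel_def)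
    then have "(k, \<lambda>i. p * x i) \<in> (\<lambda>(k, x). (k, \<lambda>i. p * x i)) ` (K0_rel n A `` {(k,x)})"
      by force
    then show ?thesis unfolding K0_zmult_def by auto
  qed
qed

definition hv :: "(nat \<Rightarrow> nat) \<Rightarrow> (nat \<Rightarrow> nat \<Rightarrow> nat \<Rightarrow> nat) \<Rightarrow> nat \<Rightarrow> nat \<Rightarrow> int" where
  "hv n A k = (\<lambda>i. int (npaths n A k i))"

lemma trans_hv: "trans n A 0 k (\<lambda>i. if i < n 0 then 1 else 0) = hv n A k"
proof (induction k)
  case 0 then show ?case by (auto simp: hv_def)
next
  case (Suc k) then show ?case by (auto simp: hv_def lvl_map_def)
qed

lemma trans_hv2: "trans n A k d (hv n A k) = hv n A (k + d)"
  using trans_add[of n A 0 k d "\<lambda>i. if i < n 0 then 1 else 0"] trans_hv[of n A] by simp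

lemma hv_reps: "(k, hv n A k) \<in> K0_reps n"
  by (cases k) (auto simp: K0_reps_def hv_def)

lemma n_pos: "bratteli n A \<Longrightarrow> 0 < n k"
proof -
  assume "bratteli n A"
  then have "1 \<le> n k" unfolding bratteli_def by blast
  then show ?thesis by simp
qed

lemma npaths_pos: "bratteli n A \<Longrightarrow> i < n k \<Longrightarrow> npaths n A k i > 0"
proof (induction k arbitrary: i)
  case 0 then show ?case by simp
next
  case (Suc k)
  have "\<forall>k\<ge>1. \<forall>i<n k. \<exists>j<n (k - 1). A k i j > 0"
    using Suc.prems(1) unfolding bratteli_def by blast
  then have "\<exists>j<n k. A (Suc k) i j > 0" using Suc.prems(2)
    by (metis diff_Suc_1 le_add1 plus_1_eq_Suc)
  then obtain j where j: "j < n k" "A (Suc k) i j > 0" by blast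
  have "0 < A (Suc k) i j * npaths n A k j" using j Suc by simp
  also have "\<dots> \<le> (\<Sum>j<n k. A (Suc k) i j * npaths n A k j)"
    using j by (intro member_le_sum) auto
  finally show ?case using Suc.prems by simp
qed

lemma dvd_from_gcd:
  fixes p c :: int
  assumes "Gcd (f ` S) = (1::nat)" "\<forall>i\<in>S. p dvd c * int (f i)"
  shows "p dvd c"
proof -
  have "\<forall>i\<in>S. nat \<bar>p\<bar> dvd nat \<bar>c\<bar> * f i"
  proof
    fix i assume "i \<in> S"
    then have "\<bar>p\<bar> dvd \<bar>c * int (f i)\<bar>" using assms(2) by simp
    then have "int (nat \<bar>p\<bar>) dvd int (nat \<bar>c\<bar> * f i)" by (simp add: abs_mult)
    then show "nat \<bar>p\<bar> dvd nat \<bar>c\<bar> * f i" by (simp only: of_nat_dvd_iff)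
  qed
  then have "nat \<bar>p\<bar> dvd Gcd ((*) (nat \<bar>c\<bar>) ` f ` S)"
    by (intro Gcd_greatest) blast
  also have "\<dots> = nat \<bar>c\<bar>" using Gcd_mult[of "nat \<bar>c\<bar>" "f ` S"] assms(1) by simp
  finally have "int (nat \<bar>p\<bar>) dvd int (nat \<bar>c\<bar>)" by (simp only: of_nat_dvd_iff)
  then show ?thesis by simp
qed

theorem mainTheorem18:
  fixes n :: "nat \<Rightarrow> nat" and A :: "nat \<Rightarrow> nat \<Rightarrow> nat \<Rightarrow> nat"
  assumes "simple_bratteli n A"
  shows "K0_Q n A = K0_Zunit n A \<longleftrightarrow>
         (\<forall>k\<ge>1. Gcd (npaths n A k ` {..<n k}) = 1)"
proof -
  have br: "bratteli n A" using assms by (simp add: simple_bratteli_def)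
  then have n0: "n 0 = 1" by (simp add: bratteli_def)
  define e :: "nat \<Rightarrow> int" where "e = (\<lambda>i. if i < n 0 then 1 else 0)"
  let ?r = "K0_rel n A"
  have e_reps: "(0, \<lambda>i. c * e i) \<in> K0_reps n" for c by (simp add: K0_reps_def e_def)
  have Zu: "K0_zmult n A c (K0_unit n A) = ?r `` {(0, \<lambda>i. c * e i)}" for c
    unfolding K0_unit_def e_def[symmetric] using zmult_class[OF e_reps[of 1]] by simp
  have ceq: "?r `` {a} = ?r `` {b} \<longleftrightarrow> (a, b) \<in> ?r" if "a \<in> K0_reps n" "b \<in> K0_reps n" for a b
    using eq_equiv_class_iff[OF equiv_rel that] .
  have te: "trans n A 0 M (\<lambda>i. c * e i) = (\<lambda>i. c * hv n A M i)" for c M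
    by (simp add: trans_scale e_def trans_hv)
  show ?thesis
  proof
    assume Q: "K0_Q n A = K0_Zunit n A"
    show "\<forall>k\<ge>1. Gcd (npaths n A k ` {..<n k}) = 1"
    proof (intro allI impI, rule ccontr)
      fix k :: nat assume "k \<ge> 1" and ne: "Gcd (npaths n A k ` {..<n k}) \<noteq> 1"
      define d where "d = Gcd (npaths n A k ` {..<n k})"
      have dvd: "d dvd npaths n A k i" for i
      proof (cases "i < n k")
        case True then show ?thesis unfolding d_def by (intro Gcd_dvd) auto
      next
        case False then show ?thesis by (cases k) auto
      qed
      define x where "x = (\<lambda>i. int (npaths n A k i div d))"
      have xd: "(\<lambda>i. int d * x i) = hv n A k"
        unfolding x_def hv_def using dvd
        by (auto simp flip: of_nat_mult)
      have xr: "(k, x) \<in> K0_reps n"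
        using hv_reps[of k n A] unfolding K0_reps_def x_def hv_def by auto
      define g where "g = ?r `` {(k, x)}"
      have gK: "g \<in> K0 n A" unfolding g_def K0_def using xr by (rule quotientI)
      have "K0_zmult n A (int d) g = ?r `` {(k, hv n A k)}"
        unfolding g_def using zmult_class[OF xr] xd by simp
      also have "\<dots> = ?r `` {(0, \<lambda>i. 1 * e i)}"
        using hv_reps[of k n A] e_reps[of 1] te[where c=1 and M=k]
        by (subst ceq) (auto simp: K0_rel_def intro!: exI[of _ k])
      also have "\<dots> = K0_zmult n A 1 (K0_unit n A)" using Zu by simp
      finally have dz: "K0_zmult n A (int d) g = K0_zmult n A 1 (K0_unit n A)" .
      have nk: "0 < n k" using n_pos[OF br] .
      have "0 < npaths n A k 0" using npaths_pos[OF br nk] .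
      then have d0: "d \<noteq> 0" using dvd[of 0] by (metis dvd_0_left_iff less_irrefl)
      have "g \<in> K0_Q n A"
      proof -
        have d0': "int d \<noteq> 0" using d0 by simp
        have "\<exists>p m. p \<noteq> 0 \<and> K0_zmult n A p g = K0_zmult n A m (K0_unit n A)"
          using dz d0' by blast
        then show ?thesis using gK unfolding K0_Q_def by blast
      qed
      then have "g \<in> K0_Zunit n A" using Q by simp
      then obtain c where "g = ?r `` {(0, \<lambda>i. c * e i)}"
        unfolding K0_Zunit_def using Zu by auto
      then have "((k, x), (0, \<lambda>i. c * e i)) \<in> ?r"
        using ceq[OF xr e_reps] g_def by simp
      then obtain M where M: "k \<le> M" "trans n A k (M - k) x = (\<lambda>i. c * hv n A M i)"
        unfolding K0_rel_def using te by auto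
      have "hv n A M = trans n A k (M - k) (hv n A k)" using trans_hv2[of n A k "M - k"] M by simp
      also have "\<dots> = (\<lambda>i. int d * (c * hv n A M i))"
        using M(2) trans_scale[of n A k "M - k" "int d" x] xd by simp
      finally have "hv n A M 0 = int d * c * hv n A M 0" by (metis mult.assoc)
      moreover have "hv n A M 0 > 0" using npaths_pos[OF br n_pos[OF br, of M]] unfolding hv_def by simp
      ultimately have "int d * c = 1" by simp
      then have "int d = 1" using zmult_eq_1_iff[of "int d" c] by auto
      then show False using ne d_def by simp
    qed
  next
    assume G: "\<forall>k\<ge>1. Gcd (npaths n A k ` {..<n k}) = 1"
    have G': "Gcd (npaths n A M ` {..<n M}) = 1" for M
    proof (cases M)
      case 0 then show ?thesis using n0 by (simp add: lessThan_Suc)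
    next
      case (Suc m) then show ?thesis using G[rule_format, of M] by (simp del: npaths.simps)
    qed
    show "K0_Q n A = K0_Zunit n A"
    proof (intro equalityI subsetI)
      fix g assume "g \<in> K0_Q n A"
      then obtain p c where gK: "g \<in> K0 n A" and p: "p \<noteq> 0"
        and pc: "K0_zmult n A p g = K0_zmult n A c (K0_unit n A)"
        unfolding K0_Q_def by auto
      obtain k x where xr: "(k, x) \<in> K0_reps n" and g: "g = ?r `` {(k, x)}"
        using gK unfolding K0_def by (auto elim!: quotientE)
      have "?r `` {(k, \<lambda>i. p * x i)} = ?r `` {(0, \<lambda>i. c * e i)}"
        using pc zmult_class[OF xr] Zu g by simp
      then have "((k, \<lambda>i. p * x i), (0, \<lambda>i. c * e i)) \<in> ?r"
        using ceq[OF reps_scale[OF xr] e_reps] by simp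
      then obtain M where M: "k \<le> M" "(\<lambda>i. p * trans n A k (M - k) x i) = (\<lambda>i. c * hv n A M i)"
        unfolding K0_rel_def using te trans_scale by auto
      have "\<forall>i\<in>{..<n M}. p dvd c * int (npaths n A M i)"
      proof
        fix i show "p dvd c * int (npaths n A M i)"
          using fun_cong[OF M(2), of i] unfolding hv_def by (metis dvd_triv_left)
      qed
      then have "p dvd c" using dvd_from_gcd[OF G'] by blast
      then obtain q where q: "c = p * q" by (auto elim: dvdE)
      have "trans n A k (M - k) x = (\<lambda>i. q * hv n A M i)"
      proof
        fix i show "trans n A k (M - k) x i = q * hv n A M i"
          using fun_cong[OF M(2), of i] p q by simp
      qed
      then have "((k, x), (0, \<lambda>i. q * e i)) \<in> ?r"
        using xr e_reps M(1) te unfolding K0_rel_def by (auto intro!: exI[of _ M])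
      then have "g = K0_zmult n A q (K0_unit n A)"
        using ceq[OF xr e_reps] g Zu by simp
      then show "g \<in> K0_Zunit n A" unfolding K0_Zunit_def by auto
    next
      fix g assume "g \<in> K0_Zunit n A"
      then obtain c where g: "g = ?r `` {(0, \<lambda>i. c * e i)}"
        unfolding K0_Zunit_def using Zu by auto
      have gK: "g \<in> K0 n A" unfolding g K0_def using e_reps by (rule quotientI)
      have "K0_zmult n A 1 g = K0_zmult n A c (K0_unit n A)"
        using zmult_class[OF e_reps] g Zu by simp
      then have "\<exists>p m. p \<noteq> 0 \<and> K0_zmult n A p g = K0_zmult n A m (K0_unit n A)"
        by (intro exI[of _ "1::int"] exI[of _ c]) simp
      then show "g \<in> K0_Q n A" using gK unfolding K0_Q_def by blast
    qed
  qed
qed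

end
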